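(* Let $A\in\mathbb{R}^{d\times d}$, $B\in\mathbb{R}^{d\times n}$, $\rho>0$, and let $M=\begin{bmatrix} Q & S^*\\ S & R\end{bmatrix}$ be a symmetric $(d+n)\times(d+n)$ real matrix with $Q=Q^*\in\mathbb{R}^{d\times d}$, $S\in\mathbb{R}^{n\times d}$, $R=R^*\in\mathbb{R}^{n\times n}$. If there exist $N\in\mathbb{R}^{n\times d}$ and $\varepsilon\in[0,2/\|R\|]$ such that $A+B(I+\varepsilon R)N+\varepsilon BS$ is $\rho$-Schur and \[ Q + 2\,\Re\, S^*N + N^*RN \geq 0, \] then $(A,B,M)$ is $\rho$-minimally stable.
   Context: Let $\ell_k$ denote the space of sequences indexed by $\mathbb{N}_{\ge0}$ with values in $\mathbb{R}^k$. $\mathcal{B}(A,B)=\{(x,u)\in\ell_{d+n}: x(k+1)=Ax(k)+Bu(k)\ \forall k\}$. A pair $(x,u)\in\ell_{d+n}$ belongs to $\mathrm{IQC}(M,\rho)$ if $\sum_{k=0}^N \rho^{-2k}\big(\langle Qx(k),x(k)\rangle + 2\langle Sx(k),u(k)\rangle + \langle Ru(k),u(k)\rangle\big)\ge 0$ for all $N\ge0$. The triple $(A,B,M)$ is $\rho$-minimally stable if for every $x_0\in\mathbb{R}^d$ there exists $(x,u)\in\mathcal{B}(A,B)\cap\mathrm{IQC}(M,\rho)$ with $x(0)=x_0$ and $\rho^{-k}x(k)\to0$ as $k\to\infty$. A square matrix is $\rho$-Schur if all its eigenvalues lie in the open disk of radius $\rho$. $\|R\|$ is the operator norm. *)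

theory Defs
  imports "HOL-Analysis.Analysis"
begin

text \<open>Behaviour of the linear system x(k+1) = A x(k) + B u(k).\<close>
definition behavior :: "real^'d^'d \<Rightarrow> real^'n^'d \<Rightarrow> (nat \<Rightarrow> real^'d) \<Rightarrow> (nat \<Rightarrow> real^'n) \<Rightarrow> bool" where
  "behavior A B x u \<longleftrightarrow> (\<forall>k. x (Suc k) = A *v x k + B *v u k)"

text \<open>IQC(M, rho) with M = [[Q, S^T],[S, R]].\<close>
definition IQC :: "real^'d^'d \<Rightarrow> real^'d^'n \<Rightarrow> real^'n^'n \<Rightarrow> real \<Rightarrow> (nat \<Rightarrow> real^'d) \<Rightarrow> (nat \<Rightarrow> real^'n) \<Rightarrow> bool" where
  "IQC Q S R \<rho> x u \<longleftrightarrow> (\<forall>N. 0 \<le> (\<Sum>k\<le>N. \<rho> powi (-2 * int k) *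
      ((Q *v x k) \<bullet> x k + 2 * ((S *v x k) \<bullet> u k) + (R *v u k) \<bullet> u k)))"

definition minimally_stable :: "real^'d^'d \<Rightarrow> real^'n^'d \<Rightarrow> real^'d^'d \<Rightarrow> real^'d^'n \<Rightarrow> real^'n^'n \<Rightarrow> real \<Rightarrow> bool" where
  "minimally_stable A B Q S R \<rho> \<longleftrightarrow> (\<forall>x0. \<exists>x u. behavior A B x u \<and> IQC Q S R \<rho> x u \<and> x 0 = x0 \<and>
      ((\<lambda>k. \<rho> powi (- int k) *\<^sub>R x k) \<longlonglongrightarrow> 0))"

text \<open>Complexification of a real matrix.\<close>
definition cmat :: "real^'m^'k \<Rightarrow> complex^'m^'k" where
  "cmat A = (\<chi> i j. complex_of_real (A $ i $ j))"

text \<open>rho-Schur: every (complex) eigenvalue lies in the open disk of radius rho.\<close>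
definition rho_schur :: "real \<Rightarrow> real^'d^'d \<Rightarrow> bool" where
  "rho_schur \<rho> A \<longleftrightarrow> (\<forall>z::complex. det (mat z - cmat A) = 0 \<longrightarrow> cmod z < \<rho>)"

definition psd :: "real^'d^'d \<Rightarrow> bool" where
  "psd P \<longleftrightarrow> (\<forall>x. 0 \<le> x \<bullet> (P *v x))"

end

theory Submission
  imports Defs "Jordan_Normal_Form.Spectral_Radius"
begin
hide_const (open) Matrix.mat Determinant.det Matrix.vec Matrix.transpose_mat

definition idx :: "'n::finite \<Rightarrow> nat" where
  "idx = (SOME h. bij_betw h (UNIV::'n set) {0..<CARD('n)})"

lemma idx_bij: "bij_betw (idx::'n::finite \<Rightarrow> nat) UNIV {0..<CARD('n)}"
proof -
  have "\<exists>h. bij_betw h (UNIV::'n set) {0..<CARD('n)}" using ex_bij_betw_finite_nat[of "UNIV::'n set"] by simp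
  thus ?thesis unfolding idx_def by (rule someI_ex)
qed

definition nidx :: "nat \<Rightarrow> 'n::finite" where "nidx = the_inv_into UNIV idx"

lemma idx_lt: "idx (j::'n::finite) < CARD('n)"
  using idx_bij[where 'n='n] bij_betwE by fastforce

lemma nidx_idx[simp]: "nidx (idx (j::'n::finite)) = j"
  unfolding nidx_def using idx_bij[where 'n='n] by (simp add: bij_betw_def the_inv_into_f_f)

lemma idx_nidx: "i < CARD('n::finite) \<Longrightarrow> idx (nidx i :: 'n) = i"
  unfolding nidx_def using idx_bij[where 'n='n] f_the_inv_into_f_bij_betw by fastforce

lemma sum_idx: "(\<Sum>l\<in>{0..<CARD('n::finite)}. g l) = (\<Sum>j\<in>(UNIV::'n set). g (idx j))"
  using sum.reindex_bij_betw[OF idx_bij[where 'n='n], of g] by simp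

definition fm :: "real^'n::finite^'n \<Rightarrow> complex mat" where
  "fm M = Matrix.mat CARD('n) CARD('n) (\<lambda>(i,j). complex_of_real (M $ nidx i $ nidx j))"
definition fv :: "complex^'n::finite \<Rightarrow> complex Matrix.vec" where
  "fv v = Matrix.vec CARD('n) (\<lambda>i. v $ nidx i)"
definition cv :: "real^'n::finite \<Rightarrow> complex^'n" where
  "cv v = (\<chi> i. complex_of_real (v $ i))"

lemma fm_carrier: "fm (M::real^'n::finite^'n) \<in> carrier_mat CARD('n) CARD('n)"
  by (simp add: fm_def)
lemma fv_carrier: "fv (v::complex^'n::finite) \<in> carrier_vec CARD('n)"
  by (simp add: fv_def)
lemma dim_fm[simp]: "dim_row (fm (M::real^'n::finite^'n)) = CARD('n)" "dim_col (fm M) = CARD('n)"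
  by (simp_all add: fm_def)
lemma dim_fv[simp]: "dim_vec (fv (v::complex^'n::finite)) = CARD('n)"
  by (simp add: fv_def)

lemma fv_index: "Matrix.vec_index (fv v) (idx j) = v $ j"
  by (simp add: fv_def idx_lt)
lemma fv_inj: assumes "fv u = fv v" shows "u = v"
  unfolding Finite_Cartesian_Product.vec_eq_iff by (metis fv_index assms)

lemma fv_mult: fixes M :: "real^'a::finite^'a" shows "fv (cmat M *v v) = fm M *\<^sub>v fv v"
proof (rule eq_vecI)
  show "dim_vec (fv (cmat M *v v)) = dim_vec (fm M *\<^sub>v fv v)" by (simp add: fv_def fm_def)
next
  fix i assume "i < dim_vec (fm M *\<^sub>v fv v)"
  hence i: "i < CARD('a)" by (simp add: fm_def)
  have "Matrix.vec_index (fm M *\<^sub>v fv v) i = (\<Sum>l\<in>{0..<CARD('a)}. fm M $$ (i,l) * Matrix.vec_index (fv v) l)"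
    using i by (simp add: mult_mat_vec_def scalar_prod_def fm_def fv_def)
  also have "\<dots> = (\<Sum>j\<in>(UNIV::'a set). fm M $$ (i,idx j) * Matrix.vec_index (fv v) (idx j))"
    by (rule sum_idx)
  also have "\<dots> = (\<Sum>j\<in>UNIV. cmat M $ nidx i $ j * v $ j)"
    using i by (simp add: fm_def fv_index idx_lt cmat_def)
  also have "\<dots> = Matrix.vec_index (fv (cmat M *v v)) i"
    using i by (simp add: fv_def matrix_vector_mult_def)
  finally show "Matrix.vec_index (fv (cmat M *v v)) i = Matrix.vec_index (fm M *\<^sub>v fv v) i" by simp
qed

lemma fv_smult: "fv (c *s v) = c \<cdot>\<^sub>v fv v"
  by (rule eq_vecI) (auto simp: fv_def)

lemma fv_zero: "fv (0::complex^'n::finite) = 0\<^sub>v CARD('n)"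
  by (rule eq_vecI) (auto simp: fv_def)

lemma eig_to_hol:
  fixes M :: "real^'n::finite^'n"
  assumes "eigenvector (fm M) w l"
  shows "\<exists>u. u \<noteq> 0 \<and> cmat M *v u = l *s u"
proof -
  define u :: "complex^'n" where "u = (\<chi> j. Matrix.vec_index w (idx j))"
  have w: "w \<in> carrier_vec CARD('n)" "w \<noteq> 0\<^sub>v CARD('n)" "fm M *\<^sub>v w = l \<cdot>\<^sub>v w"
    using assms by (auto simp: eigenvector_def fm_def)
  have fu: "fv u = w"
    using w(1) by (intro eq_vecI) (auto simp: fv_def u_def idx_nidx)
  have "u \<noteq> 0" using fu w(2) fv_zero by metis
  moreover have "fv (cmat M *v u) = fv (l *s u)"
    using fu w by (simp add: fv_mult fv_smult)
  ultimately show ?thesis using fv_inj by blast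
qed

lemma hol_to_eig:
  fixes M :: "real^'n::finite^'n"
  assumes "u \<noteq> 0" "cmat M *v u = l *s u"
  shows "eigenvector (fm M) (fv u) l"
proof -
  have "fv u \<noteq> 0\<^sub>v CARD('n)" using assms(1) fv_inj[of u 0] fv_zero by metis
  moreover have "fm M *\<^sub>v fv u = l \<cdot>\<^sub>v fv u" using assms(2) by (metis fv_mult fv_smult)
  ultimately show ?thesis unfolding eigenvector_def by (simp add: fv_carrier fm_def)
qed

lemma hol_eig_det:
  fixes K :: "complex^'n::finite^'n"
  assumes "u \<noteq> 0" "K *v u = 0"
  shows "det K = 0"
proof -
  have "\<not> inj ((*v) K)"
    using assms by (metis inj_eq matrix_vector_mult_0_right)
  thus ?thesis using det_nz_iff_inj_gen[of "(*v) K"]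
    by (simp add: matrix_vector_mul_linear_gen matrix_of_matrix_vector_mul)
qed

lemma mat_mult_vec: "(mat z :: complex^'n::finite^'n) *v u = z *s u"
proof -
  have "(\<Sum>j\<in>UNIV. (if i = j then z else 0) * u $ j) = z * u $ i" for i
  proof -
    have "(\<Sum>j\<in>UNIV. (if i = j then z else 0) * u $ j) = (\<Sum>j\<in>UNIV. if i = j then z * u $ j else 0)"
      by (rule sum.cong) auto
    thus ?thesis by simp
  qed
  thus ?thesis by (simp add: Finite_Cartesian_Product.vec_eq_iff matrix_vector_mult_def Finite_Cartesian_Product.mat_def)
qed

lemma smat_vec: "(c *\<^sub>R (M::real^'m::finite^'n::finite)) *v v = c *\<^sub>R (M *v v)"
  by (simp add: Finite_Cartesian_Product.vec_eq_iff matrix_vector_mult_def sum_distrib_left algebra_simps)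

lemma mat_svec: "(M::real^'m::finite^'n::finite) *v (c *\<^sub>R v) = c *\<^sub>R (M *v v)"
  by (simp add: Finite_Cartesian_Product.vec_eq_iff matrix_vector_mult_def sum_distrib_left algebra_simps)

lemma cmat_scale: "cmat (c *\<^sub>R M) *v u = complex_of_real c *s (cmat M *v u)"
  by (simp add: Finite_Cartesian_Product.vec_eq_iff cmat_def matrix_vector_mult_def sum_distrib_left algebra_simps)

lemma cv_mult: "cmat M *v cv v = cv (M *v v)"
  by (simp add: Finite_Cartesian_Product.vec_eq_iff cmat_def cv_def matrix_vector_mult_def)

lemma pow_mat_Suc': "A \<in> carrier_mat n n \<Longrightarrow> A ^\<^sub>m Suc k = A * A ^\<^sub>m k"
proof (induction k)
  case 0 thus ?case by simp
next
  case (Suc k)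
  have "A ^\<^sub>m Suc (Suc k) = (A * A ^\<^sub>m k) * A" using Suc by simp
  also have "\<dots> = A * (A ^\<^sub>m k * A)" using Suc.prems by (simp add: assoc_mult_mat[of _ n n _ n])
  finally show ?case by simp
qed


lemma schur_eig_bound:
  fixes C :: "real^'n::finite^'n"
  assumes "rho_schur \<rho> C" "eigenvalue (fm C) l"
  shows "cmod l < \<rho>"
proof -
  obtain w where "eigenvector (fm C) w l" using assms(2) by (auto simp: eigenvalue_def)
  then obtain u where u: "u \<noteq> 0" "cmat C *v u = l *s u" using eig_to_hol by blast
  have "(mat l - cmat C) *v u = 0"
    using u by (simp add: matrix_vector_mult_diff_rdistrib mat_mult_vec)
  hence "det (mat l - cmat C) = 0" using hol_eig_det u(1) by blast
  thus ?thesis using assms(1) by (simp add: rho_schur_def)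
qed

lemma schur_decay:
  fixes C :: "real^'n::finite^'n"
  assumes rho: "\<rho> > 0" and sch: "rho_schur \<rho> C"
  shows "\<exists>s K. 0 < s \<and> s < \<rho> \<and> (\<forall>k i. \<bar>(((*v) C) ^^ k) x0 $ i\<bar> \<le> K * s ^ k)"
proof -
  let ?n = "CARD('n)"
  have n0: "0 < ?n" by simp
  define r where "r = spectral_radius (fm C)"
  have "r \<in> cmod ` spectrum (fm C)"
    unfolding r_def by (rule spectral_radius_mem_max(1)[OF fm_carrier n0])
  then obtain l where l: "eigenvalue (fm C) l" "r = cmod l" by (auto simp: spectrum_def)
  have r_lt: "r < \<rho>" using schur_eig_bound[OF sch l(1)] l(2) by simp
  have r0: "0 \<le> r" using l(2) by simp
  define s where "s = (r + \<rho>) / 2"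
  have s: "0 < s" "s < \<rho>" "r < s" using r_lt r0 rho by (auto simp: s_def)
  define C' where "C' = (1/s) *\<^sub>R C"
  have CC': "C = s *\<^sub>R C'" using s by (simp add: C'_def)
  have sr1: "spectral_radius (fm C') < 1"
  proof -
    have "spectral_radius (fm C') \<in> cmod ` spectrum (fm C')"
      by (rule spectral_radius_mem_max(1)[OF fm_carrier n0])
    then obtain m where m: "eigenvalue (fm C') m" "spectral_radius (fm C') = cmod m"
      by (auto simp: spectrum_def)
    obtain w where "eigenvector (fm C') w m" using m(1) by (auto simp: eigenvalue_def)
    then obtain u where u: "u \<noteq> 0" "cmat C' *v u = m *s u" using eig_to_hol by blast
    have "cmat C *v u = (complex_of_real s * m) *s u"
      using u(2) unfolding CC' cmat_scale by simp
    hence "eigenvector (fm C) (fv u) (complex_of_real s * m)" using hol_to_eig u(1) by blast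
    hence "eigenvalue (fm C) (complex_of_real s * m)" unfolding eigenvalue_def by blast
    hence "cmod (complex_of_real s * m) \<in> cmod ` spectrum (fm C)"
      by (simp add: spectrum_def)
    hence "cmod (complex_of_real s * m) \<le> r"
      unfolding r_def by (rule spectral_radius_mem_max(2)[OF fm_carrier n0])
    hence "s * cmod m \<le> r" using s by (simp add: norm_mult)
    hence "s * cmod m < s * 1" using s by linarith
    hence "cmod m < 1" using s(1) mult_less_cancel_left_pos by blast
    thus ?thesis using m(2) by simp
  qed
  obtain c where c: "\<And>k. norm_bound (fm C' ^\<^sub>m k) c"
    using spectral_radius_jnf_norm_bound_less_1_upper_triangular[OF fm_carrier sr1] by blast
  define z where "z k = (((*v) C') ^^ k) x0" for k
  define w0 where "w0 = fv (cv x0)"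
  have zk: "fv (cv (z k)) = fm C' ^\<^sub>m k *\<^sub>v w0" for k
  proof (induction k)
    case 0 thus ?case by (simp add: z_def w0_def fv_carrier fm_def)
  next
    case (Suc k)
    have "fv (cv (z (Suc k))) = fv (cmat C' *v cv (z k))" by (simp add: z_def cv_mult)
    also have "\<dots> = fm C' *\<^sub>v (fm C' ^\<^sub>m k *\<^sub>v w0)" by (simp add: fv_mult Suc)
    also have "\<dots> = (fm C' * fm C' ^\<^sub>m k) *\<^sub>v w0"
      by (rule assoc_mult_mat_vec[symmetric, of _ ?n ?n _ ?n]) (auto simp: fm_carrier w0_def fv_carrier)
    also have "\<dots> = fm C' ^\<^sub>m Suc k *\<^sub>v w0" by (metis pow_mat_Suc'[OF fm_carrier])
    finally show ?case .
  qed
  define W where "W = (\<Sum>l\<in>{0..<?n}. cmod (w0 $ l))"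
  have zb: "\<bar>z k $ i\<bar> \<le> c * W" for k i
  proof -
    let ?P = "fm C' ^\<^sub>m k"
    have P: "?P \<in> carrier_mat ?n ?n" by (simp add: fm_carrier)
    have "\<bar>z k $ i\<bar> = cmod (fv (cv (z k)) $ idx i)"
      by (simp add: fv_index cv_def)
    also have "\<dots> = cmod (\<Sum>l\<in>{0..<?n}. ?P $$ (idx i, l) * w0 $ l)"
      using P idx_lt[of i] by (simp add: zk mult_mat_vec_def scalar_prod_def w0_def fv_carrier)
    also have "\<dots> \<le> (\<Sum>l\<in>{0..<?n}. cmod (?P $$ (idx i, l) * w0 $ l))"
      by (rule norm_sum)
    also have "\<dots> \<le> (\<Sum>l\<in>{0..<?n}. c * cmod (w0 $ l))"
    proof (rule sum_mono)
      fix l assume "l \<in> {0..<?n}"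
      hence "cmod (?P $$ (idx i, l)) \<le> c" using c[of k] P idx_lt[of i]
        by (auto simp: norm_bound_def)
      thus "cmod (?P $$ (idx i, l) * w0 $ l) \<le> c * cmod (w0 $ l)"
        by (simp add: norm_mult mult_right_mono)
    qed
    also have "\<dots> = c * W" by (simp add: W_def sum_distrib_left)
    finally show ?thesis .
  qed
  have xz: "(((*v) C) ^^ k) x0 = s ^ k *\<^sub>R z k" for k
  proof (induction k)
    case 0 thus ?case by (simp add: z_def)
  next
    case (Suc k)
    have "(((*v) C) ^^ Suc k) x0 = C *v (s ^ k *\<^sub>R z k)" using Suc by simp
    also have "\<dots> = s ^ Suc k *\<^sub>R z (Suc k)"
      by (simp add: CC' z_def smat_vec mat_svec mult.commute)
    finally show ?case .
  qed
  have "\<bar>(((*v) C) ^^ k) x0 $ i\<bar> \<le> (c * W) * s ^ k" for k i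
  proof -
    have "\<bar>(((*v) C) ^^ k) x0 $ i\<bar> = s ^ k * \<bar>z k $ i\<bar>" using s(1) by (simp add: xz abs_mult)
    also have "\<dots> \<le> s ^ k * (c * W)" using zb s(1) by (simp add: mult_left_mono)
    finally show ?thesis by (simp add: mult.commute)
  qed
  thus ?thesis using s by blast
qed


lemma dot_transpose: "inner (x::real^'n::finite) (transpose M *v y) = inner (M *v x) y"
  by (metis dot_lmul_matrix inner_commute vector_transpose_matrix)

lemma dot_vmul: "inner (x::real^'n::finite) (y v* M) = inner (M *v x) y"
  by (metis dot_lmul_matrix inner_commute)

lemma iqc_term:
  fixes Q :: "real^'d::finite^'d" and S :: "real^'d^'n::finite" and R :: "real^'n^'n"
    and N :: "real^'d^'n"
  assumes symR: "transpose R = R" and e0: "0 \<le> e" and eR: "e * onorm (\<lambda>v. R *v v) \<le> 2"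
    and P: "psd (Q + transpose S ** N + transpose N ** S + transpose N ** R ** N)"
  shows "0 \<le> inner (Q *v v) v + 2 * inner (S *v v) (((mat 1 + e *\<^sub>R R) ** N + e *\<^sub>R S) *v v)
     + inner (R *v (((mat 1 + e *\<^sub>R R) ** N + e *\<^sub>R S) *v v)) (((mat 1 + e *\<^sub>R R) ** N + e *\<^sub>R S) *v v)"
proof -
  define n1 where "n1 = N *v v"
  define w where "w = R *v n1 + S *v v"
  have u: "((mat 1 + e *\<^sub>R R) ** N + e *\<^sub>R S) *v v = n1 + e *\<^sub>R w"
    by (simp add: n1_def w_def matrix_vector_mult_add_rdistrib matrix_vector_mul_assoc[symmetric]
        scaleR_matrix_vector_assoc algebra_simps)
  have Rsym: "inner (R *v a) b = inner a (R *v b)" for a b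
    using dot_transpose[of a R b] symR by (simp add: inner_commute)
  have Pv: "inner v ((Q + transpose S ** N + transpose N ** S + transpose N ** R ** N) *v v)
      = inner (Q *v v) v + 2 * inner (S *v v) n1 + inner (R *v n1) n1"
    by (simp add: matrix_vector_mult_add_rdistrib matrix_vector_mul_assoc[symmetric] dot_transpose dot_vmul
        inner_add_right n1_def inner_commute)
  have "0 \<le> inner v ((Q + transpose S ** N + transpose N ** S + transpose N ** R ** N) *v v)"
    using P by (simp add: psd_def)
  have expand: "inner (Q *v v) v + 2 * inner (S *v v) (n1 + e *\<^sub>R w) + inner (R *v (n1 + e *\<^sub>R w)) (n1 + e *\<^sub>R w)
     = inner v ((Q + transpose S ** N + transpose N ** S + transpose N ** R ** N) *v v)
       + e * (2 * inner w w + e * inner (R *v w) w)"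
  proof -
    have "inner (R *v (n1 + e *\<^sub>R w)) (n1 + e *\<^sub>R w) = inner (R *v n1) n1 + 2 * e * inner (R *v n1) w + e * e * inner (R *v w) w"
      using Rsym[of w n1]
      by (simp add: matrix_vector_right_distrib matrix_vector_mult_scaleR inner_add_left inner_add_right inner_commute algebra_simps)
    moreover have "inner w w = inner (R *v n1) w + inner (S *v v) w"
      by (simp add: w_def inner_add_left)
    ultimately show ?thesis unfolding Pv
      by (simp add: inner_add_right algebra_simps w_def[symmetric])
  qed
  have bl: "bounded_linear (\<lambda>v. R *v v)" by (rule matrix_vector_mul_bounded_linear)
  have "\<bar>inner (R *v w) w\<bar> \<le> norm (R *v w) * norm w" by (rule Cauchy_Schwarz_ineq2)
  also have "\<dots> \<le> onorm (\<lambda>v. R *v v) * norm w * norm w"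
    using onorm[OF bl, of w] by (simp add: mult_right_mono)
  finally have "e * (- inner (R *v w) w) \<le> e * (onorm (\<lambda>v. R *v v) * norm w * norm w)"
    using e0 by (intro mult_left_mono) auto
  also have "\<dots> = (e * onorm (\<lambda>v. R *v v)) * (norm w * norm w)" by simp
  also have "\<dots> \<le> 2 * (norm w * norm w)" using eR by (intro mult_right_mono) auto
  also have "\<dots> = 2 * inner w w" by (simp add: dot_square_norm power2_eq_square)
  finally have "0 \<le> 2 * inner w w + e * inner (R *v w) w" by simp
  hence "0 \<le> e * (2 * inner w w + e * inner (R *v w) w)" using e0 by simp
  thus ?thesis unfolding u expand
    using \<open>0 \<le> inner v ((Q + transpose S ** N + transpose N ** S + transpose N ** R ** N) *v v)\<close> by linarith
qed


theorem lemma2p4: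
  fixes A :: "real^'d^'d" and B :: "real^'n^'d" and Q :: "real^'d^'d"
    and S :: "real^'d^'n" and R :: "real^'n^'n" and \<rho> :: real
  assumes "\<rho> > 0"
    and "transpose Q = Q" and "transpose R = R"
    and "\<exists>(N :: real^'d^'n) (\<epsilon>::real). 0 \<le> \<epsilon> \<and> \<epsilon> * onorm (\<lambda>v. R *v v) \<le> 2 \<and>
           rho_schur \<rho> (A + B ** (mat 1 + \<epsilon> *\<^sub>R R) ** N + \<epsilon> *\<^sub>R (B ** S)) \<and>
           psd (Q + transpose S ** N + transpose N ** S + transpose N ** R ** N)"
  shows "minimally_stable A B Q S R \<rho>"
proof -
  obtain N :: "real^'d^'n" and e :: real where e0: "0 \<le> e" and eR: "e * onorm (\<lambda>v. R *v v) \<le> 2"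
    and sch: "rho_schur \<rho> (A + B ** (mat 1 + e *\<^sub>R R) ** N + e *\<^sub>R (B ** S))"
    and P: "psd (Q + transpose S ** N + transpose N ** S + transpose N ** R ** N)"
    using assms(4) by blast
  define C where "C = A + B ** (mat 1 + e *\<^sub>R R) ** N + e *\<^sub>R (B ** S)"
  define K where "K = (mat 1 + e *\<^sub>R R) ** N + e *\<^sub>R S"
  have CK: "C *v v = A *v v + B *v (K *v v)" for v
    by (simp add: C_def K_def matrix_vector_mult_add_rdistrib matrix_vector_mul_assoc[symmetric]
        matrix_vector_right_distrib smat_vec mat_svec matrix_mul_assoc)
  show ?thesis unfolding minimally_stable_def
  proof
    fix x0 :: "real^'d"
    define x where "x k = (((*v) C) ^^ k) x0" for k
    define u where "u k = K *v x k" for k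
    have beh: "behavior A B x u"
      unfolding behavior_def by (simp add: x_def u_def CK)
    have iqc: "IQC Q S R \<rho> x u"
      unfolding IQC_def
    proof
      fix M
      show "0 \<le> (\<Sum>k\<le>M. \<rho> powi (-2 * int k) *
        ((Q *v x k) \<bullet> x k + 2 * ((S *v x k) \<bullet> u k) + (R *v u k) \<bullet> u k))"
      proof (rule sum_nonneg)
        fix k assume "k \<in> {..M}"
        have "0 \<le> \<rho> powi (-2 * int k)" using assms(1) by simp
        moreover have "0 \<le> (Q *v x k) \<bullet> x k + 2 * ((S *v x k) \<bullet> u k) + (R *v u k) \<bullet> u k"
          unfolding u_def K_def by (rule iqc_term[OF assms(3) e0 eR P])
        ultimately show "0 \<le> \<rho> powi (-2 * int k) *
          ((Q *v x k) \<bullet> x k + 2 * ((S *v x k) \<bullet> u k) + (R *v u k) \<bullet> u k)" by simp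
      qed
    qed
    obtain s Kb where s: "0 < s" "s < \<rho>" and bnd: "\<And>k i. \<bar>x k $ i\<bar> \<le> Kb * s ^ k"
      using schur_decay[OF assms(1) sch[folded C_def], of x0] unfolding x_def by blast
    have lim: "(\<lambda>k. \<rho> powi (- int k) *\<^sub>R x k) \<longlonglongrightarrow> 0"
    proof (rule Lim_null_comparison)
      show "\<forall>\<^sub>F k in sequentially. norm (\<rho> powi (- int k) *\<^sub>R x k) \<le> (real CARD('d) * Kb) * (s / \<rho>) ^ k"
      proof (rule always_eventually, rule allI)
        fix k
        have pk: "\<rho> powi (- int k) = inverse (\<rho> ^ k)" by (simp add: power_int_minus)
        have "norm (x k) \<le> (\<Sum>i\<in>UNIV. \<bar>x k $ i\<bar>)" by (rule norm_le_l1_cart)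
        also have "\<dots> \<le> (\<Sum>i\<in>(UNIV::'d set). Kb * s ^ k)" by (rule sum_mono) (rule bnd)
        also have "\<dots> = real CARD('d) * Kb * s ^ k" by simp
        finally have "inverse (\<rho> ^ k) * norm (x k) \<le> inverse (\<rho> ^ k) * (real CARD('d) * Kb * s ^ k)"
          using assms(1) by (intro mult_left_mono) auto
        thus "norm (\<rho> powi (- int k) *\<^sub>R x k) \<le> (real CARD('d) * Kb) * (s / \<rho>) ^ k"
          using assms(1) by (simp add: pk power_divide field_simps)
      qed
      have "(\<lambda>k. (s / \<rho>) ^ k) \<longlonglongrightarrow> 0"
        using s assms(1) by (intro LIMSEQ_power_zero) auto
      thus "(\<lambda>k. (real CARD('d) * Kb) * (s / \<rho>) ^ k) \<longlonglongrightarrow> 0"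
        by (rule tendsto_mult_right_zero)
    qed
    show "\<exists>x u. behavior A B x u \<and> IQC Q S R \<rho> x u \<and> x 0 = x0 \<and>
      (\<lambda>k. \<rho> powi (- int k) *\<^sub>R x k) \<longlonglongrightarrow> 0"
      using beh iqc lim by (intro exI[of _ x] exI[of _ u]) (simp add: x_def)
  qed
qed

end
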